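(* Let $\mathsf{R}$ be a commutative ring and let $f = \sum_{k=1}^t a_k \mathbf{x}^{\mathbf{e}_k} \in \mathsf{R}[x_1,\ldots,x_n]$ with nonzero $a_k$, pairwise distinct exponent vectors $\mathbf{e}_k\in\mathbb{Z}_{\ge 0}^n$, max degree less than $D$, and $t\le T$. Let $0<\mu<1$ and let $1\le i\le t$ be the index of a term of $f$. Let $\lambda$ be the least prime number with $\lambda \ge T/\mu$. If integers $s_1,\ldots,s_n$ are chosen independently and uniformly at random from $\{0,1,\ldots,\lambda-1\}$, then the probability that the $i$th term of $f$ collides in $f(z^{s_1},\ldots,z^{s_n})$ is less than $\mu$.
   Context: Here $\mathbf{x}^{\mathbf{e}} = x_1^{e_1}\cdots x_n^{e_n}$. "Max degree less than $D$" means every variable occurs in $f$ with exponent less than $D$. For $\mathbf{s}=(s_1,\ldots,s_n)$, the $i$th term of $f$ collides in the substitution $f(z^{s_1},\ldots,z^{s_n})$ if there exists $j\neq i$ with $\mathbf{e}_i\cdot\mathbf{s} = \mathbf{e}_j\cdot\mathbf{s}$. *)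

theory Defs
  imports "HOL-Probability.Probability" "HOL-Computational_Algebra.Primes"
begin

text \<open>The sparse polynomial f = sum_{k=1..t} a k * x^(e k) in n variables is represented
by its coefficient function a and exponent vectors e k (entries e k v for v < n).
Exponent of z for term k in the substitution x_v := z^(s v):\<close>

definition subst_exp :: "nat \<Rightarrow> (nat \<Rightarrow> nat) \<Rightarrow> (nat \<Rightarrow> nat) \<Rightarrow> nat" where
  "subst_exp n ek s = (\<Sum>v<n. ek v * s v)"

definition collides :: "nat \<Rightarrow> nat \<Rightarrow> (nat \<Rightarrow> nat \<Rightarrow> nat) \<Rightarrow> nat \<Rightarrow> (nat \<Rightarrow> nat) \<Rightarrow> bool" where
  "collides n t e i s \<longleftrightarrow> (\<exists>j\<in>{1..t}. j \<noteq> i \<and> subst_exp n (e i) s = subst_exp n (e j) s)"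

end

theory Submission
  imports Defs
begin

lemma subst_exp_split:
  assumes "v < n"
  shows "subst_exp n d s = d v * s v + (\<Sum>u\<in>{..<n}-{v}. d u * s u)"
  unfolding subst_exp_def using assms
  by (simp add: sum.remove[of "{..<n}" v])

lemma restrict_eq_sum:
  assumes "restrict s ({..<n}-{v}) = restrict s' ({..<n}-{v})"
  shows "(\<Sum>u\<in>{..<n}-{v}. d u * s u) = (\<Sum>u\<in>{..<n}-{v}. d u * s' u)"
proof (rule sum.cong)
  fix u assume "u \<in> {..<n}-{v}"
  then have "s u = s' u" using assms by (metis restrict_apply')
  then show "d u * s u = d u * s' u" by simp
qed simp

lemma card_bad:
  assumes v: "v < n" and dv: "d1 v \<noteq> d2 v"
  shows "card (PiE {..<n} (\<lambda>_. {..<L}) \<inter> {s. subst_exp n d1 s = subst_exp n d2 s}) \<le> L^(n-1)"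
proof -
  let ?B = "PiE {..<n} (\<lambda>_. {..<L}) \<inter> {s. subst_exp n d1 s = subst_exp n d2 s}"
  let ?r = "\<lambda>s. restrict s ({..<n}-{v})"
  have inj: "inj_on ?r ?B"
  proof (rule inj_onI)
    fix s s' assume s: "s \<in> ?B" and s': "s' \<in> ?B" and eq: "?r s = ?r s'"
    define C1 where "C1 = (\<Sum>u\<in>{..<n}-{v}. d1 u * s u)"
    define C2 where "C2 = (\<Sum>u\<in>{..<n}-{v}. d2 u * s u)"
    have c1: "C1 = (\<Sum>u\<in>{..<n}-{v}. d1 u * s' u)" unfolding C1_def by (rule restrict_eq_sum[OF eq])
    have c2: "C2 = (\<Sum>u\<in>{..<n}-{v}. d2 u * s' u)" unfolding C2_def by (rule restrict_eq_sum[OF eq])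
    have e1: "d1 v * s v + C1 = d2 v * s v + C2"
      using s subst_exp_split[OF v, of d1 s] subst_exp_split[OF v, of d2 s] C1_def C2_def by simp
    have e2: "d1 v * s' v + C1 = d2 v * s' v + C2"
      using s' subst_exp_split[OF v, of d1 s'] subst_exp_split[OF v, of d2 s'] c1 c2 by simp
    have "(int (d1 v) - int (d2 v)) * (int (s v) - int (s' v)) = 0"
      using arg_cong[OF e1, of int] arg_cong[OF e2, of int] by (simp add: algebra_simps)
    with dv have sv: "s v = s' v" by simp
    show "s = s'"
    proof
      fix u
      show "s u = s' u"
      proof (cases "u \<in> {..<n}-{v}")
        case True then show ?thesis using eq by (metis restrict_apply')
      next
        case False
        then have "u = v \<or> u \<notin> {..<n}" by auto
        then show ?thesis using sv s s' by (auto simp: PiE_def extensional_def)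
      qed
    qed
  qed
  have sub: "?r ` ?B \<subseteq> PiE ({..<n}-{v}) (\<lambda>_. {..<L})"
    by (auto simp: PiE_def Pi_def)
  have "card ?B = card (?r ` ?B)" using inj by (simp add: card_image)
  also have "\<dots> \<le> card (PiE ({..<n}-{v}) (\<lambda>_. {..<L}))"
    by (rule card_mono[OF _ sub]) (simp add: finite_PiE)
  also have "\<dots> = L^(n-1)" using v by (simp add: card_PiE)
  finally show ?thesis .
qed

theorem lemma3p3:
  fixes a :: "nat \<Rightarrow> 'r::comm_ring_1"
    and e :: "nat \<Rightarrow> nat \<Rightarrow> nat"
    and n t T D i :: nat
    and \<mu> :: real
  assumes nonzero: "\<forall>k\<in>{1..t}. a k \<noteq> 0"
    and distinct: "\<forall>k\<in>{1..t}. \<forall>l\<in>{1..t}. k \<noteq> l \<longrightarrow> (\<exists>v<n. e k v \<noteq> e l v)"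
    and maxdeg: "\<forall>k\<in>{1..t}. \<forall>v<n. e k v < D"
    and tT: "t \<le> T"
    and mu: "0 < \<mu>" "\<mu> < 1"
    and i: "1 \<le> i" "i \<le> t"
  shows "measure_pmf.prob
           (pmf_of_set (PiE {..<n} (\<lambda>_. {..<(LEAST p::nat. prime p \<and> real p \<ge> real T / \<mu>)})))
           {s. collides n t e i s} < \<mu>"
proof -
  define L where "L = (LEAST p::nat. prime p \<and> real p \<ge> real T / \<mu>)"
  define N where "N = nat \<lceil>real T / \<mu>\<rceil>"
  obtain p0 :: nat where p0: "prime p0" "p0 > N" using bigger_prime[of N] by blast
  have "real T / \<mu> \<le> real N" unfolding N_def by (rule real_nat_ceiling_ge)
  also have "real N \<le> real p0" using p0(2) by simp
  finally have p0le: "real T / \<mu> \<le> real p0" .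
  have PL: "prime L \<and> real L \<ge> real T / \<mu>" unfolding L_def
    by (rule LeastI[of _ p0]) (use p0(1) p0le in blast)
  have Lp: "L > 0" using PL prime_gt_0_nat by blast
  have LT: "real L \<ge> real T / \<mu>" using PL by blast
  define S where "S = PiE {..<n} (\<lambda>_. {..<L})"
  have fin: "finite S" unfolding S_def by (simp add: finite_PiE)
  have ne: "S \<noteq> {}" unfolding S_def using Lp by (auto simp: PiE_eq_empty_iff)
  have cardS: "card S = L^n" unfolding S_def by (simp add: card_PiE)
  let ?J = "{1..t}-{i}"
  have col: "S \<inter> {s. collides n t e i s} = (\<Union>j\<in>?J. S \<inter> {s. subst_exp n (e i) s = subst_exp n (e j) s})"
    unfolding collides_def by auto
  have each: "card (S \<inter> {s. subst_exp n (e i) s = subst_exp n (e j) s}) \<le> L^(n-1)" if "j \<in> ?J" for j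
  proof -
    from that i have "i \<in> {1..t}" "j \<in> {1..t}" "i \<noteq> j" by auto
    then have "\<exists>v<n. e i v \<noteq> e j v" using distinct by blast
    then obtain v where "v < n" "e i v \<noteq> e j v" by blast
    then show ?thesis unfolding S_def by (rule card_bad)
  qed
  have cardJ: "card ?J = t - 1" using i by simp
  have cnt: "card (S \<inter> {s. collides n t e i s}) \<le> (t-1) * L^(n-1)"
  proof -
    have "card (S \<inter> {s. collides n t e i s}) \<le> (\<Sum>j\<in>?J. card (S \<inter> {s. subst_exp n (e i) s = subst_exp n (e j) s}))"
      unfolding col by (rule card_UN_le) simp
    also have "\<dots> \<le> (\<Sum>j\<in>?J. L^(n-1))" by (rule sum_mono) (rule each)
    also have "\<dots> = (t-1) * L^(n-1)" using cardJ by simp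
    finally show ?thesis .
  qed
  have prob: "measure_pmf.prob (pmf_of_set S) {s. collides n t e i s} = card (S \<inter> {s. collides n t e i s}) / card S"
    using measure_pmf_of_set[OF ne fin] by simp
  show ?thesis
  proof (cases "t = 1")
    case True
    then have "S \<inter> {s. collides n t e i s} = {}" using i unfolding collides_def by auto
    then show ?thesis using prob mu unfolding S_def L_def by simp
  next
    case False
    have "card ?J > 0" using cardJ False i by simp
    then have "?J \<noteq> {}" by (metis card.empty less_irrefl)
    then obtain j where j: "j \<in> ?J" by blast
    from j i have "i \<in> {1..t}" "j \<in> {1..t}" "i \<noteq> j" by auto
    then have "\<exists>v<n. e i v \<noteq> e j v" using distinct by blast
    then obtain v where "v < n" by blast
    hence n1: "n \<ge> 1" by simp
    have "real (card (S \<inter> {s. collides n t e i s})) \<le> real (t-1) * real L^(n-1)"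
    proof -
      have "real (card (S \<inter> {s. collides n t e i s})) \<le> real ((t-1) * L^(n-1))"
        using cnt by (simp only: of_nat_le_iff)
      then show ?thesis by simp
    qed
    hence "measure_pmf.prob (pmf_of_set S) {s. collides n t e i s} \<le> real (t-1) * real L^(n-1) / real L^n"
      using prob cardS Lp by (simp add: divide_right_mono)
    also have "\<dots> = real (t-1) / real L"
      using n1 Lp by (cases n) (auto simp: field_simps)
    also have "\<dots> < real T / real L" using tT i Lp by (simp add: divide_strict_right_mono)
    also have "\<dots> \<le> \<mu>" using LT Lp mu by (simp add: field_simps)
    finally show ?thesis unfolding S_def L_def .
  qed
qed

end
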